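(* Let $\mathbb K$ be a field with $2\in\mathbb K^\times$, $A$ a unital commutative associative $\mathbb K$-algebra, $\mathfrak k$ a $\mathbb K$-Lie algebra and $\mathfrak g=A\otimes\mathfrak k$. Let $F:A\otimes\mathfrak k\otimes\mathfrak k\otimes\mathfrak k\to\Lambda^2(\mathfrak g)$ be the linear map with $F(a\otimes x\otimes y\otimes z)=(a\wedge\mathbf 1\otimes[x,y]\vee z)+a\otimes\partial_{\mathfrak k}(x\wedge y\wedge z)$. Then $$B_2(\mathfrak g)=\Lambda^2(A)\otimes\mathfrak k.S^2(\mathfrak k)+T_0(A)\otimes(\mathfrak k\vee\mathfrak k')+\mathrm{im}(F)+I_A\otimes(\mathfrak k\wedge\mathfrak k').$$
   Context: $\mathfrak g$ has bracket $[a\otimes x,a'\otimes x']=aa'\otimes[x,x']$, $ax=a\otimes x$, unit $\mathbf 1$, $\mathfrak k'=[\mathfrak k,\mathfrak k]$. $v\wedge w=\tfrac12(v\otimes w-w\otimes v)$, $v\vee w=\tfrac12(v\otimes w+w\otimes v)$. For a Lie algebra $\mathfrak h$, $\partial_{\mathfrak h}:\Lambda^3(\mathfrak h)\to\Lambda^2(\mathfrak h)$, $u\wedge v\wedge w\mapsto[u,v]\wedge w+[v,w]\wedge u+[w,u]\wedge v$, and $B_2(\mathfrak g)=\mathrm{im}\,\partial_{\mathfrak g}$. $I_A$ is the kernel of multiplication $S^2(A)\to A$. The spaces $\Lambda^2(A)\otimes S^2(\mathfrak k)$, $A\otimes\Lambda^2(\mathfrak k)$, $I_A\otimes\Lambda^2(\mathfrak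 k)$ are regarded as subspaces of $\Lambda^2(\mathfrak g)$ via $a\wedge b\otimes x\vee y\mapsto\tfrac12(ax\wedge by+ay\wedge bx)$, $a\otimes x\wedge y\mapsto\tfrac12(ax\wedge\mathbf 1y-ay\wedge\mathbf 1x)$, $a\vee b\otimes x\wedge y\mapsto\tfrac12(ax\wedge by-ay\wedge bx)$, and $\Lambda^2(\mathfrak g)$ is their direct sum. $\mathfrak k.S^2(\mathfrak k)$ is the span of $[z,x]\vee y+x\vee[z,y]$; $\mathfrak k\vee\mathfrak k'$ (resp. $\mathfrak k\wedge\mathfrak k'$) the span of $x\vee y$ (resp. $x\wedge y$) with $x\in\mathfrak k$, $y\in\mathfrak k'$. $T_0(A)$ is the span of $ab\wedge c+bc\wedge a+ca\wedge b-abc\wedge\mathbf 1$. *)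

theory Defs
  imports Complex_Main "HOL-Library.Function_Algebras"
begin

text \<open>
  For K-vector spaces V, W the canonical map
  V \<otimes> W \<rightarrow> (V* \<times> W* \<rightarrow> K), v \<otimes> w \<mapsto> (f,g) \<mapsto> f v * g w, is injective.
  We use the 4-fold version to model g \<otimes> g = (A \<otimes> k) \<otimes> (A \<otimes> k):
  the element (a\<otimes>x)\<otimes>(b\<otimes>y) is the function on quadruples of linear
  functionals (f,g,h,l) \<mapsto> f a * g x * h b * l y (and 0 on non-linear arguments).
  Lambda^2(g) is the subspace of antisymmetric tensors, u \<and> v = (u\<otimes>v - v\<otimes>u)/2.
\<close>

type_synonym ('k,'a,'l) ten4 = "('a \<Rightarrow> 'k) \<Rightarrow> ('l \<Rightarrow> 'k) \<Rightarrow> ('a \<Rightarrow> 'k) \<Rightarrow> ('l \<Rightarrow> 'k) \<Rightarrow> 'k"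

definition tscale :: "'k::field \<Rightarrow> ('k,'a,'l) ten4 \<Rightarrow> ('k,'a,'l) ten4" where
  "tscale c T = (\<lambda>f g h l. c * T f g h l)"

definition tspan :: "('k::field,'a,'l) ten4 set \<Rightarrow> ('k,'a,'l) ten4 set" where
  "tspan S = module.span tscale S"

text \<open>The unit of A is passed explicitly as a parameter u.\<close>

definition tp :: "('k::field \<Rightarrow> 'a::comm_ring \<Rightarrow> 'a) \<Rightarrow> ('k \<Rightarrow> 'l::ab_group_add \<Rightarrow> 'l)
    \<Rightarrow> 'a \<Rightarrow> 'l \<Rightarrow> 'a \<Rightarrow> 'l \<Rightarrow> ('k,'a,'l) ten4" where
  "tp sA sL a x b y = (\<lambda>f g h l.
     if Vector_Spaces.linear sA (*) f \<and> Vector_Spaces.linear sL (*) g \<and>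
        Vector_Spaces.linear sA (*) h \<and> Vector_Spaces.linear sL (*) l
     then f a * g x * h b * l y else 0)"

definition wd :: "('k::field \<Rightarrow> 'a::comm_ring \<Rightarrow> 'a) \<Rightarrow> ('k \<Rightarrow> 'l::ab_group_add \<Rightarrow> 'l)
    \<Rightarrow> 'a \<Rightarrow> 'l \<Rightarrow> 'a \<Rightarrow> 'l \<Rightarrow> ('k,'a,'l) ten4" where
  "wd sA sL a x b y = tscale (inverse 2) (tp sA sL a x b y - tp sA sL b y a x)"

text \<open>Elements of g = A \<otimes> k are represented by lists [(a_1,x_1),...,(a_n,x_n)]
  standing for sum a_i \<otimes> x_i.  Wedge of two elements of g (bilinear extension):\<close>
definition gwedge :: "('k::field \<Rightarrow> 'a::comm_ring \<Rightarrow> 'a) \<Rightarrow> ('k \<Rightarrow> 'l::ab_group_add \<Rightarrow> 'l)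
    \<Rightarrow> ('a \<times> 'l) list \<Rightarrow> ('a \<times> 'l) list \<Rightarrow> ('k,'a,'l) ten4" where
  "gwedge sA sL us vs = sum_list [wd sA sL a x b y. (a,x) \<leftarrow> us, (b,y) \<leftarrow> vs]"

definition gbr :: "('l \<Rightarrow> 'l \<Rightarrow> 'l) \<Rightarrow> ('a::comm_ring \<times> 'l) list \<Rightarrow> ('a \<times> 'l) list \<Rightarrow> ('a \<times> 'l) list" where
  "gbr br us vs = [(a * b, br x y). (a,x) \<leftarrow> us, (b,y) \<leftarrow> vs]"

definition bdry_g :: "('k::field \<Rightarrow> 'a::comm_ring \<Rightarrow> 'a) \<Rightarrow> ('k \<Rightarrow> 'l::ab_group_add \<Rightarrow> 'l)
    \<Rightarrow> ('l \<Rightarrow> 'l \<Rightarrow> 'l) \<Rightarrow> ('a \<times> 'l) list \<Rightarrow> ('a \<times> 'l) list \<Rightarrow> ('a \<times> 'l) list \<Rightarrow> ('k,'a,'l) ten4" where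
  "bdry_g sA sL br us vs ws =
     gwedge sA sL (gbr br us vs) ws + gwedge sA sL (gbr br vs ws) us + gwedge sA sL (gbr br ws us) vs"

text \<open>B_2(g) = im \<partial>_g; Lambda^3(g) is spanned by the u \<and> v \<and> w with u,v,w \<in> g.\<close>
definition B2 :: "('k::field \<Rightarrow> 'a::comm_ring \<Rightarrow> 'a) \<Rightarrow> ('k \<Rightarrow> 'l::ab_group_add \<Rightarrow> 'l)
    \<Rightarrow> ('l \<Rightarrow> 'l \<Rightarrow> 'l) \<Rightarrow> ('k,'a,'l) ten4 set" where
  "B2 sA sL br = tspan {bdry_g sA sL br us vs ws | us vs ws. True}"

(* a \<and> b \<otimes> x \<or> y  \<mapsto> (ax \<and> by + ay \<and> bx)/2 *)
definition embLS :: "('k::field \<Rightarrow> 'a::comm_ring \<Rightarrow> 'a) \<Rightarrow> ('k \<Rightarrow> 'l::ab_group_add \<Rightarrow> 'l)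
    \<Rightarrow> 'a \<Rightarrow> 'a \<Rightarrow> 'l \<Rightarrow> 'l \<Rightarrow> ('k,'a,'l) ten4" where
  "embLS sA sL a b x y = tscale (inverse 2) (wd sA sL a x b y + wd sA sL a y b x)"

(* a \<otimes> x \<and> y  \<mapsto> (ax \<and> 1y - ay \<and> 1x)/2 *)
definition embAL :: "('k::field \<Rightarrow> 'a::comm_ring \<Rightarrow> 'a) \<Rightarrow> ('k \<Rightarrow> 'l::ab_group_add \<Rightarrow> 'l)
    \<Rightarrow> 'a \<Rightarrow> 'a \<Rightarrow> 'l \<Rightarrow> 'l \<Rightarrow> ('k,'a,'l) ten4" where
  "embAL sA sL u a x y = tscale (inverse 2) (wd sA sL a x u y - wd sA sL a y u x)"

(* a \<or> b \<otimes> x \<and> y  \<mapsto> (ax \<and> by - ay \<and> bx)/2 *)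
definition embIL :: "('k::field \<Rightarrow> 'a::comm_ring \<Rightarrow> 'a) \<Rightarrow> ('k \<Rightarrow> 'l::ab_group_add \<Rightarrow> 'l)
    \<Rightarrow> 'a \<Rightarrow> 'a \<Rightarrow> 'l \<Rightarrow> 'l \<Rightarrow> ('k,'a,'l) ten4" where
  "embIL sA sL a b x y = tscale (inverse 2) (wd sA sL a x b y - wd sA sL a y b x)"

definition kder :: "('k::field \<Rightarrow> 'l::ab_group_add \<Rightarrow> 'l) \<Rightarrow> ('l \<Rightarrow> 'l \<Rightarrow> 'l) \<Rightarrow> 'l set" where
  "kder sL br = module.span sL {br u v | u v. True}"

text \<open>Lambda^2(A) \<otimes> k.S^2(k): spanned by (a \<and> b) \<otimes> ([z,x] \<or> y + x \<or> [z,y]).\<close>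
definition V1 :: "('k::field \<Rightarrow> 'a::comm_ring \<Rightarrow> 'a) \<Rightarrow> ('k \<Rightarrow> 'l::ab_group_add \<Rightarrow> 'l)
    \<Rightarrow> ('l \<Rightarrow> 'l \<Rightarrow> 'l) \<Rightarrow> ('k,'a,'l) ten4 set" where
  "V1 sA sL br = tspan {embLS sA sL a b (br z x) y + embLS sA sL a b x (br z y) | a b x y z. True}"

text \<open>T_0(A) \<otimes> (k \<or> k'): spanned by (ab \<and> c + bc \<and> a + ca \<and> b - abc \<and> 1) \<otimes> (x \<or> y), y \<in> k'.\<close>
definition V2 :: "('k::field \<Rightarrow> 'a::comm_ring \<Rightarrow> 'a) \<Rightarrow> ('k \<Rightarrow> 'l::ab_group_add \<Rightarrow> 'l)
    \<Rightarrow> 'a \<Rightarrow> ('l \<Rightarrow> 'l \<Rightarrow> 'l) \<Rightarrow> ('k,'a,'l) ten4 set" where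
  "V2 sA sL u br = tspan {embLS sA sL (a*b) c x y + embLS sA sL (b*c) a x y + embLS sA sL (c*a) b x y
                        - embLS sA sL (a*b*c) u x y | a b c x y. y \<in> kder sL br}"

text \<open>im(F), F(a\<otimes>x\<otimes>y\<otimes>z) = (a \<and> 1 \<otimes> [x,y] \<or> z) + a \<otimes> ([x,y] \<and> z + [y,z] \<and> x + [z,x] \<and> y).\<close>
definition Fmap :: "('k::field \<Rightarrow> 'a::comm_ring \<Rightarrow> 'a) \<Rightarrow> ('k \<Rightarrow> 'l::ab_group_add \<Rightarrow> 'l)
    \<Rightarrow> 'a \<Rightarrow> ('l \<Rightarrow> 'l \<Rightarrow> 'l) \<Rightarrow> 'a \<Rightarrow> 'l \<Rightarrow> 'l \<Rightarrow> 'l \<Rightarrow> ('k,'a,'l) ten4" where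
  "Fmap sA sL u br a x y z = embLS sA sL a u (br x y) z
      + (embAL sA sL u a (br x y) z + embAL sA sL u a (br y z) x + embAL sA sL u a (br z x) y)"

definition V3 :: "('k::field \<Rightarrow> 'a::comm_ring \<Rightarrow> 'a) \<Rightarrow> ('k \<Rightarrow> 'l::ab_group_add \<Rightarrow> 'l)
    \<Rightarrow> 'a \<Rightarrow> ('l \<Rightarrow> 'l \<Rightarrow> 'l) \<Rightarrow> ('k,'a,'l) ten4 set" where
  "V3 sA sL u br = tspan {Fmap sA sL u br a x y z | a x y z. True}"

text \<open>I_A \<otimes> (k \<and> k'): elements of S^2(A) are sums  sum a_i \<or> b_i  (lists of pairs);
  I_A consists of those with sum a_i b_i = 0.\<close>
definition V4 :: "('k::field \<Rightarrow> 'a::comm_ring \<Rightarrow> 'a) \<Rightarrow> ('k \<Rightarrow> 'l::ab_group_add \<Rightarrow> 'l)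
    \<Rightarrow> ('l \<Rightarrow> 'l \<Rightarrow> 'l) \<Rightarrow> ('k,'a,'l) ten4 set" where
  "V4 sA sL br = tspan {sum_list [embIL sA sL a b x y. (a,b) \<leftarrow> ps] | ps x y.
                        sum_list [a * b. (a,b) \<leftarrow> ps] = 0 \<and> y \<in> kder sL br}"

end

theory Submission
  imports Defs
begin


lemma tscale_module: "module (tscale :: 'k::field \<Rightarrow> ('k,'a,'l) ten4 \<Rightarrow> ('k,'a,'l) ten4)"
  by unfold_locales (auto simp: tscale_def fun_eq_iff algebra_simps)

lemma lin_add: "Vector_Spaces.linear s1 s2 f \<Longrightarrow> f (x + y) = f x + f y"
  by (simp add: Vector_Spaces.linear_iff)
lemma lin_scale: "Vector_Spaces.linear s1 s2 f \<Longrightarrow> f (s1 c x) = s2 c (f x)"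
  by (simp add: Vector_Spaces.linear_iff)
lemma lin_neg: "Vector_Spaces.linear s1 s2 f \<Longrightarrow> f (- x) = - f x"
  by (metis Vector_Spaces.linear_iff_module_hom module_hom.neg)
lemma lin_zero: "Vector_Spaces.linear s1 s2 f \<Longrightarrow> f 0 = 0"
  by (metis Vector_Spaces.linear_iff_module_hom module_hom.zero)

lemma gwedge_Nil1[simp]: "gwedge sA sL [] vs = 0" by (simp add: gwedge_def)
lemma gwedge_Nil2[simp]: "gwedge sA sL us [] = 0" by (induction us) (auto simp add: gwedge_def)
lemma gwedge_Cons1: "gwedge sA sL (p # us) vs = gwedge sA sL [p] vs + gwedge sA sL us vs"
  by (cases p) (simp add: gwedge_def)
lemma gwedge_app1: "gwedge sA sL (xs @ ys) vs = gwedge sA sL xs vs + gwedge sA sL ys vs"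
  by (simp add: gwedge_def)
lemma gwedge_app2: "gwedge sA sL us (xs @ ys) = gwedge sA sL us xs + gwedge sA sL us ys"
  by (induction us) (auto simp add: gwedge_def algebra_simps)
lemma gbr_Cons1: "gbr br (p # us) vs = gbr br [p] vs @ gbr br us vs"
  by (cases p) (simp add: gbr_def)
lemma gbr_Nil2[simp]: "gbr br us [] = []"
  by (induction us) (auto simp: gbr_def)
lemma gbr_Nil1[simp]: "gbr br [] us = []"
  by (simp add: gbr_def)
lemma gbr_single_app: "gbr br [w] (xs @ ys) = gbr br [w] xs @ gbr br [w] ys"
  by (cases w) (simp add: gbr_def)
lemma gwedge_gbr_app2: "gwedge sA sL (gbr br ws (xs @ ys)) vs = gwedge sA sL (gbr br ws xs) vs + gwedge sA sL (gbr br ws ys) vs"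
proof (induction ws)
  case Nil then show ?case by simp
next
  case (Cons w ws)
  show ?case
    apply (subst gbr_Cons1) apply (subst gbr_Cons1[of br w ws xs]) apply (subst gbr_Cons1[of br w ws ys])
    by (simp add: gwedge_app1 gbr_single_app Cons.IH ac_simps fun_eq_iff)
qed
lemma bdry_Nil1: "bdry_g sA sL br [] vs ws = 0"
  by (simp add: bdry_g_def)
lemma bdry_Cons1: "bdry_g sA sL br (p # us) vs ws = bdry_g sA sL br [p] vs ws + bdry_g sA sL br us vs ws"
proof -
  have "gwedge sA sL X (p # us) = gwedge sA sL X [p] + gwedge sA sL X us" for X
    using gwedge_app2[of sA sL X "[p]" us] by simp
  moreover have "gwedge sA sL (gbr br ws (p # us)) vs = gwedge sA sL (gbr br ws [p]) vs + gwedge sA sL (gbr br ws us) vs"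
    using gwedge_gbr_app2[of sA sL br ws "[p]" us vs] by simp
  ultimately show ?thesis
    by (simp add: bdry_g_def gbr_Cons1[of br p us] gwedge_app1 algebra_simps)
qed
lemma bdry_rot: "bdry_g sA sL br us vs ws = bdry_g sA sL br vs ws us"
  by (simp add: bdry_g_def ac_simps)

definition hf :: "'k::field" where "hf = inverse 2"

definition LIN :: "('k::field \<Rightarrow> 'a::comm_ring \<Rightarrow> 'a) \<Rightarrow> ('k \<Rightarrow> 'l::ab_group_add \<Rightarrow> 'l) \<Rightarrow> ('a \<Rightarrow> 'k) \<Rightarrow> ('l \<Rightarrow> 'k) \<Rightarrow> ('a \<Rightarrow> 'k) \<Rightarrow> ('l \<Rightarrow> 'k) \<Rightarrow> bool" where
  "LIN sA sL f g h l \<longleftrightarrow> Vector_Spaces.linear sA (*) f \<and> Vector_Spaces.linear sL (*) g \<and> Vector_Spaces.linear sA (*) h \<and> Vector_Spaces.linear sL (*) l"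

lemma tp_ev: "tp sA sL a x b y f g h l = (if LIN sA sL f g h l then f a * g x * h b * l y else 0)"
  by (simp add: tp_def LIN_def)
lemma tscale_ev: "tscale c T f g h l = c * T f g h l" by (simp add: tscale_def)
lemma wd_ev: "wd sA sL a x b y f g h l = (if LIN sA sL f g h l then hf * (f a * g x * h b * l y - f b * g y * h a * l x) else 0)"
  by (simp add: wd_def tscale_ev tp_ev hf_def)
lemma embLS_ev: "embLS sA sL a b x y f g h l = (if LIN sA sL f g h l then hf * (hf * (f a * g x * h b * l y - f b * g y * h a * l x) + hf * (f a * g y * h b * l x - f b * g x * h a * l y)) else 0)"
  by (simp add: embLS_def tscale_ev wd_ev hf_def)
lemma embIL_ev: "embIL sA sL a b x y f g h l = (if LIN sA sL f g h l then hf * (hf * (f a * g x * h b * l y - f b * g y * h a * l x) - hf * (f a * g y * h b * l x - f b * g x * h a * l y)) else 0)"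
  by (simp add: embIL_def tscale_ev wd_ev hf_def)
lemma embAL_ev: "embAL sA sL u a x y f g h l = (if LIN sA sL f g h l then hf * (hf * (f a * g x * h u * l y - f u * g y * h a * l x) - hf * (f a * g y * h u * l x - f u * g x * h a * l y)) else 0)"
  by (simp add: embAL_def tscale_ev wd_ev hf_def)
lemma sum_list_ev: "sum_list xs f g h l = sum_list (map (\<lambda>T. T f g h l) xs)"
  by (induction xs) auto
lemma bdry1: "bdry_g sA sL br [(a,x)] [(b,y)] [(c,z)] = wd sA sL (a*b) (br x y) c z + wd sA sL (b*c) (br y z) a x + wd sA sL (c*a) (br z x) b y"
  by (simp add: bdry_g_def gwedge_def gbr_def)
lemmas ev_simps = tscale_ev wd_ev embLS_ev embIL_ev embAL_ev sum_list_ev bdry1 Fmap_def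

lemma hf2: "(2::'k::field) \<noteq> 0 \<Longrightarrow> 2 * (hf::'k) = 1"
  by (simp add: hf_def)

lemma LIN_neg:
  assumes "LIN sA sL f g h l"
  shows "f (- p) = - f p" "h (- p) = - h p" "g (- q) = - g q" "l (- q) = - l q"
  using assms by (auto simp: LIN_def intro: lin_neg)

lemma sub_ident:
  fixes sA :: "'k::field \<Rightarrow> 'a::comm_ring \<Rightarrow> 'a" and sL :: "'k \<Rightarrow> 'l::ab_group_add \<Rightarrow> 'l"
  assumes two: "(2::'k) \<noteq> 0" and unitA: "\<And>a. u * a = a" and anti: "\<And>x y. br y x = - br x y"
  shows "bdry_g sA sL br [(a,x)] [(b,y)] [(c,z)] =
    - sum_list [embIL sA sL a b z (br x y). (a,b) \<leftarrow> [(a*b, c), (-(a*b*c), u)]]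
    - sum_list [embIL sA sL a b x (br y z). (a,b) \<leftarrow> [(b*c, a), (-(a*b*c), u)]]
    - sum_list [embIL sA sL a b y (br z x). (a,b) \<leftarrow> [(c*a, b), (-(a*b*c), u)]]
    + Fmap sA sL u br (a*b*c) x y z
    + (embLS sA sL (a*b) c z (br x y) + embLS sA sL (b*c) a z (br x y) + embLS sA sL (c*a) b z (br x y)
         - embLS sA sL (a*b*c) u z (br x y))
    + (embLS sA sL (b*c) a (br y z) x + embLS sA sL (b*c) a z (br y x))
    - (embLS sA sL (c*a) b (br x z) y + embLS sA sL (c*a) b z (br x y))"
    (is "?L = ?R")
proof (rule ext)+
  fix f g h l
  show "?L f g h l = ?R f g h l"
  proof (cases "LIN sA sL f g h l")
    case False
    then show ?thesis by (simp add: ev_simps)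
  next
    case True
    note N = LIN_neg[OF True]
    have B: "br y x = - br x y" "br x z = - br z x" by (rule anti)+
    have h2: "2 * (hf::'k) = 1" using two by (rule hf2)
    show ?thesis
      apply (simp add: ev_simps N B True)
      using h2 by algebra
  qed
qed
lemma V1_ident:
  fixes sA :: "'k::field \<Rightarrow> 'a::comm_ring \<Rightarrow> 'a" and sL :: "'k \<Rightarrow> 'l::ab_group_add \<Rightarrow> 'l"
  assumes unitA: "\<And>a. u * a = a" and anti: "\<And>x y. br y x = - br x y"
  shows "embLS sA sL a b (br z x) y + embLS sA sL a b x (br z y) = tscale hf (- (bdry_g sA sL br [(u,x)] [(a,y)] [(b,z)] + bdry_g sA sL br [(u,x)] [(a,z)] [(b,y)] + bdry_g sA sL br [(u,y)] [(a,x)] [(b,z)] + bdry_g sA sL br [(u,y)] [(a,z)] [(b,x)]))"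
    (is "?L = ?R")
proof (rule ext)+
  fix f g h l
  show "?L f g h l = ?R f g h l"
  proof (cases "LIN sA sL f g h l")
    case False
    then show ?thesis by (simp add: ev_simps)
  next
    case True
    note N = LIN_neg[OF True]
    have B: "br y x = - br x y" "br z y = - br y z" "br x z = - br z x" by (rule anti)+
    have U: "p * u = p" for p using unitA[of p] by (simp add: mult.commute)
    show ?thesis
      by (simp add: ev_simps N B True unitA U ) algebra
  qed
qed

lemma V3_ident:
  fixes sA :: "'k::field \<Rightarrow> 'a::comm_ring \<Rightarrow> 'a" and sL :: "'k \<Rightarrow> 'l::ab_group_add \<Rightarrow> 'l"
  assumes unitA: "\<And>a. u * a = a" and anti: "\<And>x y. br y x = - br x y"
  shows "Fmap sA sL u br a x y z = tscale hf (bdry_g sA sL br [(u,y)] [(u,z)] [(a,x)] - bdry_g sA sL br [(u,x)] [(u,z)] [(a,y)])"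
    (is "?L = ?R")
proof (rule ext)+
  fix f g h l
  show "?L f g h l = ?R f g h l"
  proof (cases "LIN sA sL f g h l")
    case False
    then show ?thesis by (simp add: ev_simps)
  next
    case True
    note N = LIN_neg[OF True]
    have B: "br y x = - br x y" "br z y = - br y z" "br x z = - br z x" by (rule anti)+
    have U: "p * u = p" for p using unitA[of p] by (simp add: mult.commute)
    show ?thesis
      by (simp add: ev_simps N B True unitA U ) algebra
  qed
qed

lemma V4_ident:
  fixes sA :: "'k::field \<Rightarrow> 'a::comm_ring \<Rightarrow> 'a" and sL :: "'k \<Rightarrow> 'l::ab_group_add \<Rightarrow> 'l"
  assumes unitA: "\<And>a. u * a = a" and anti: "\<And>x y. br y x = - br x y"
  shows "embIL sA sL a b x (br p q) - embIL sA sL (a*b) u x (br p q) = tscale hf (bdry_g sA sL br [(u,p)] [(u,q)] [((a*b),x)] - bdry_g sA sL br [(u,x)] [(a,q)] [(b,p)] - bdry_g sA sL br [(u,p)] [(a,q)] [(b,x)] - bdry_g sA sL br [(u,q)] [(a,x)] [(b,p)])"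
    (is "?L = ?R")
proof (rule ext)+
  fix f g h l
  show "?L f g h l = ?R f g h l"
  proof (cases "LIN sA sL f g h l")
    case False
    then show ?thesis by (simp add: ev_simps)
  next
    case True
    note N = LIN_neg[OF True]
    have B: "br q p = - br p q" "br x q = - br q x" "br p x = - br x p" by (rule anti)+
    have U: "p * u = p" for p using unitA[of p] by (simp add: mult.commute)
    show ?thesis
      by (simp add: ev_simps N B True unitA U ) algebra
  qed
qed

lemma V2_ident:
  fixes sA :: "'k::field \<Rightarrow> 'a::comm_ring \<Rightarrow> 'a" and sL :: "'k \<Rightarrow> 'l::ab_group_add \<Rightarrow> 'l"
  assumes two: "(2::'k) \<noteq> 0" and unitA: "\<And>a. u * a = a" and anti: "\<And>x y. br y x = - br x y"
  shows "embLS sA sL (a*b) c x (br p q) + embLS sA sL (b*c) a x (br p q) + embLS sA sL (c*a) b x (br p q) - embLS sA sL (a*b*c) u x (br p q) = tscale hf (bdry_g sA sL br [(u,p)] [(u,q)] [((a*b*c),x)] - bdry_g sA sL br [(u,x)] [(a,q)] [((b*c),p)] - bdry_g sA sL br [(u,p)] [(a,q)] [((b*c),x)] - bdry_g sA sL br [(u,q)] [(a,x)] [((b*c),p)] + bdry_g sA sL br [(u,x)] [((a*b),q)] [(c,p)] + bdry_g sA sL br [(u,p)] [((a*b),x)] [(c,q)] + bdry_g sA sL br [(u,p)] [((a*b),x)] [(c,q)] + bdry_g sA sL br [(u,p)] [((a*b),q)] [(c,x)] + bdry_g sA sL br [(u,q)] [((a*b),x)] [(c,p)] + bdry_g sA sL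 br [(u,x)] [((c*a),q)] [(b,p)] + bdry_g sA sL br [(u,p)] [((c*a),q)] [(b,x)] - bdry_g sA sL br [(u,q)] [((c*a),x)] [(b,p)]) + bdry_g sA sL br [(a,x)] [(b,p)] [(c,q)]"
    (is "?L = ?R")
proof (rule ext)+
  fix f g h l
  show "?L f g h l = ?R f g h l"
  proof (cases "LIN sA sL f g h l")
    case False
    then show ?thesis by (simp add: ev_simps)
  next
    case True
    note N = LIN_neg[OF True]
    have B: "br q p = - br p q" "br x q = - br q x" "br p x = - br x p" by (rule anti)+
    have U: "p * u = p" for p using unitA[of p] by (simp add: mult.commute)
    define m where "m = a*b*c"
    have M: "a*b*c = m" "a*(b*c) = m" "c*a*b = m" unfolding m_def by (simp_all add: ac_simps)
    have h2: "2 * (hf::'k) = 1" using two by (rule hf2)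
    show ?thesis
      apply (simp add: ev_simps N B True unitA U M)
      using h2 by algebra
  qed
qed


lemma LIN_lin:
  assumes "LIN sA sL f g h l"
  shows "f (p1 + p2) = f p1 + f p2" "h (p1 + p2) = h p1 + h p2"
    "g (q1 + q2) = g q1 + g q2" "l (q1 + q2) = l q1 + l q2"
    "g (sL c q) = c * g q" "l (sL c q) = c * l q"
    "f 0 = 0" "h 0 = 0" "g 0 = 0" "l 0 = 0"
  using assms by (auto simp: LIN_def intro: lin_add lin_scale lin_zero)

lemma embLS_add2: "embLS sA sL p q x (y1 + y2) = embLS sA sL p q x y1 + embLS sA sL p q x y2"
  (is "?L = ?R")
proof (rule ext)+
  fix f g h l show "?L f g h l = ?R f g h l"
    by (cases "LIN sA sL f g h l") (simp_all add: ev_simps LIN_lin algebra_simps)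
qed
lemma embLS_scale2: "embLS sA sL p q x (sL c y) = tscale c (embLS sA sL p q x y)"
  (is "?L = ?R")
proof (rule ext)+
  fix f g h l show "?L f g h l = ?R f g h l"
    by (cases "LIN sA sL f g h l") (simp_all add: ev_simps LIN_lin algebra_simps)
qed
lemma embLS_zero2: "embLS sA sL p q x 0 = 0"
  (is "?L = ?R")
proof (rule ext)+
  fix f g h l show "?L f g h l = ?R f g h l"
    by (cases "LIN sA sL f g h l") (simp_all add: ev_simps LIN_lin algebra_simps)
qed
lemma embIL_add2: "embIL sA sL p q x (y1 + y2) = embIL sA sL p q x y1 + embIL sA sL p q x y2"
  (is "?L = ?R")
proof (rule ext)+
  fix f g h l show "?L f g h l = ?R f g h l"
    by (cases "LIN sA sL f g h l") (simp_all add: ev_simps LIN_lin algebra_simps)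
qed
lemma embIL_scale2: "embIL sA sL p q x (sL c y) = tscale c (embIL sA sL p q x y)"
  (is "?L = ?R")
proof (rule ext)+
  fix f g h l show "?L f g h l = ?R f g h l"
    by (cases "LIN sA sL f g h l") (simp_all add: ev_simps LIN_lin algebra_simps)
qed
lemma embIL_zero2: "embIL sA sL p q x 0 = 0"
  (is "?L = ?R")
proof (rule ext)+
  fix f g h l show "?L f g h l = ?R f g h l"
    by (cases "LIN sA sL f g h l") (simp_all add: ev_simps LIN_lin algebra_simps)
qed
lemma embIL_add1: "embIL sA sL (p1 + p2) q x y = embIL sA sL p1 q x y + embIL sA sL p2 q x y"
  (is "?L = ?R")
proof (rule ext)+
  fix f g h l show "?L f g h l = ?R f g h l"
    by (cases "LIN sA sL f g h l") (simp_all add: ev_simps LIN_lin algebra_simps)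
qed
lemma embIL_zero1: "embIL sA sL 0 q x y = 0"
  (is "?L = ?R")
proof (rule ext)+
  fix f g h l show "?L f g h l = ?R f g h l"
    by (cases "LIN sA sL f g h l") (simp_all add: ev_simps LIN_lin algebra_simps)
qed
lemma tscale_zero: "tscale c 0 = 0" by (auto simp: fun_eq_iff tscale_def)
lemma tscale_add: "tscale c (X + Y) = tscale c X + tscale c Y" by (auto simp: fun_eq_iff tscale_def algebra_simps)
lemma tscale_diff: "tscale c (X - Y) = tscale c X - tscale c Y" by (auto simp: fun_eq_iff tscale_def algebra_simps)
lemma tscale_scale: "tscale c (tscale d X) = tscale (c*d) X" by (auto simp: fun_eq_iff tscale_def algebra_simps)

lemma V4_reduce:
  "sum_list [embIL sA sL a b x y. (a,b) \<leftarrow> ps] =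
   sum_list [embIL sA sL a b x y - embIL sA sL (a*b) u x y. (a,b) \<leftarrow> ps] + embIL sA sL (sum_list [a*b. (a,b) \<leftarrow> ps]) u x y"
  by (induction ps) (auto simp: embIL_zero1 embIL_add1 algebra_simps)

lemma bdry_in:
  fixes X :: "('k::field,'a::comm_ring,'l::ab_group_add) ten4 set"
  assumes sub: "module.subspace tscale X"
    and base: "\<And>p q r. bdry_g sA sL br [p] [q] [r] \<in> X"
  shows "bdry_g sA sL br us vs ws \<in> X"
proof -
  interpret T: module "tscale :: 'k \<Rightarrow> ('k,'a,'l) ten4 \<Rightarrow> _" by (rule tscale_module)
  have c: "bdry_g sA sL br [p] [q] ws \<in> X" for p q ws
  proof (induction ws)
    case Nil then show ?case using bdry_rot[of sA sL br "[p]" "[q]" "[]"] bdry_Nil1 T.subspace_0[OF sub]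
      by (metis bdry_rot)
  next
    case (Cons r ws)
    have "bdry_g sA sL br [p] [q] (r # ws) = bdry_g sA sL br [r] [p] [q] + bdry_g sA sL br ws [p] [q]"
      by (metis bdry_rot bdry_Cons1)
    also have "\<dots> \<in> X" using base Cons.IH T.subspace_add[OF sub] by (metis bdry_rot)
    finally show ?case .
  qed
  have b: "bdry_g sA sL br [p] vs ws \<in> X" for p vs ws
  proof (induction vs arbitrary: ws)
    case Nil then show ?case using T.subspace_0[OF sub] by (metis bdry_rot bdry_Nil1)
  next
    case (Cons q vs)
    have "bdry_g sA sL br [p] (q # vs) ws = bdry_g sA sL br [q] ws [p] + bdry_g sA sL br vs ws [p]"
      by (metis bdry_rot bdry_Cons1)
    also have "\<dots> \<in> X" using c Cons.IH T.subspace_add[OF sub] by (metis bdry_rot)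
    finally show ?case .
  qed
  show ?thesis
  proof (induction us arbitrary: vs ws)
    case Nil then show ?case using T.subspace_0[OF sub] by (metis bdry_Nil1)
  next
    case (Cons p us)
    have "bdry_g sA sL br [p] vs ws + bdry_g sA sL br us vs ws \<in> X" by (rule T.subspace_add[OF sub b Cons.IH])
    then show ?case by (subst bdry_Cons1)
  qed
qed

lemma sum_list_in:
  fixes X :: "('k::field,'a::comm_ring,'l::ab_group_add) ten4 set"
  assumes sub: "module.subspace tscale X" and "\<And>T. T \<in> set xs \<Longrightarrow> T \<in> X"
  shows "sum_list xs \<in> X"
proof -
  interpret T: module "tscale :: 'k \<Rightarrow> ('k,'a,'l) ten4 \<Rightarrow> _" by (rule tscale_module)
  show ?thesis using assms(2) by (induction xs) (auto intro: T.subspace_0[OF sub] T.subspace_add[OF sub])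
qed


theorem theorem2p4:
  fixes sA :: "'k::field \<Rightarrow> 'a::comm_ring \<Rightarrow> 'a"
    and u :: 'a
    and sL :: "'k \<Rightarrow> 'l::ab_group_add \<Rightarrow> 'l"
    and br :: "'l \<Rightarrow> 'l \<Rightarrow> 'l"
  assumes two: "(2::'k) \<noteq> 0"
    and vsA: "vector_space sA"
    and unitA: "\<And>a. u * a = a"
    and algA: "\<And>c a b. sA c (a * b) = sA c a * b"
    and vsL: "vector_space sL"
    and br_add_left: "\<And>x y z. br (x + y) z = br x z + br y z"
    and br_add_right: "\<And>x y z. br x (y + z) = br x y + br x z"
    and br_scale_left: "\<And>c x y. br (sL c x) y = sL c (br x y)"
    and br_scale_right: "\<And>c x y. br x (sL c y) = sL c (br x y)"
    and br_alt: "\<And>x. br x x = 0"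
    and jacobi: "\<And>x y z. br x (br y z) + br y (br z x) + br z (br x y) = 0"
  shows "B2 sA sL br = tspan (V1 sA sL br \<union> V2 sA sL u br \<union> V3 sA sL u br \<union> V4 sA sL br)"
proof -
  interpret T: module "tscale :: 'k \<Rightarrow> ('k,'a,'l) ten4 \<Rightarrow> ('k,'a,'l) ten4" by (rule tscale_module)
  interpret L: vector_space sL by (rule vsL)
  have anti: "br y x = - br x y" for x y
  proof -
    have "0 = br (x + y) (x + y)" by (rule br_alt[symmetric])
    also have "\<dots> = br x x + br y x + (br x y + br y y)" by (simp only: br_add_left br_add_right)
    also have "\<dots> = br x y + br y x" by (simp add: br_alt add.commute)
    finally have "br x y + br y x = 0" by simp
    then show ?thesis by (simp add: eq_neg_iff_add_eq_0 add.commute)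
  qed
  have B2sub: "T.subspace (B2 sA sL br)" unfolding B2_def tspan_def by (rule T.subspace_span)
  have Gin: "bdry_g sA sL br us vs ws \<in> B2 sA sL br" for us vs ws
    unfolding B2_def tspan_def by (rule T.span_base) blast
  note cl = T.subspace_scale[OF B2sub] T.subspace_add[OF B2sub] T.subspace_diff[OF B2sub] T.subspace_neg[OF B2sub] Gin
  have kb: "br p q \<in> kder sL br" for p q unfolding kder_def by (rule L.span_base) blast
  have V1s: "V1 sA sL br \<subseteq> B2 sA sL br"
    unfolding V1_def tspan_def
  proof (rule T.span_minimal[OF _ B2sub], safe)
    fix a b x y z
    show "embLS sA sL a b (br z x) y + embLS sA sL a b x (br z y) \<in> B2 sA sL br"
      by (subst V1_ident[OF unitA anti]) (intro cl)
  qed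
  have V3s: "V3 sA sL u br \<subseteq> B2 sA sL br"
    unfolding V3_def tspan_def
  proof (rule T.span_minimal[OF _ B2sub], safe)
    fix a x y z
    show "Fmap sA sL u br a x y z \<in> B2 sA sL br"
      by (subst V3_ident[OF unitA anti]) (intro cl)
  qed
  have V2s: "V2 sA sL u br \<subseteq> B2 sA sL br"
    unfolding V2_def tspan_def
  proof (rule T.span_minimal[OF _ B2sub], safe)
    fix a b c x y
    assume y: "y \<in> kder sL br"
    let ?P = "\<lambda>y. embLS sA sL (a*b) c x y + embLS sA sL (b*c) a x y + embLS sA sL (c*a) b x y - embLS sA sL (a*b*c) u x y \<in> B2 sA sL br"
    have "?P y"
      using y unfolding kder_def
    proof (induction rule: L.span_induct)
      case base
      show ?case
      proof (rule L.subspaceI; unfold mem_Collect_eq)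
        show "?P 0" using T.subspace_0[OF B2sub] by (simp add: embLS_zero2)
      next
        fix y1 y2 assume "?P y1" "?P y2"
        have "embLS sA sL (a*b) c x (y1+y2) + embLS sA sL (b*c) a x (y1+y2) + embLS sA sL (c*a) b x (y1+y2) - embLS sA sL (a*b*c) u x (y1+y2)
          = (embLS sA sL (a*b) c x y1 + embLS sA sL (b*c) a x y1 + embLS sA sL (c*a) b x y1 - embLS sA sL (a*b*c) u x y1)
          + (embLS sA sL (a*b) c x y2 + embLS sA sL (b*c) a x y2 + embLS sA sL (c*a) b x y2 - embLS sA sL (a*b*c) u x y2)"
          by (simp add: embLS_add2 fun_eq_iff algebra_simps)
        with \<open>?P y1\<close> \<open>?P y2\<close> show "?P (y1 + y2)"
          using T.subspace_add[OF B2sub] by metis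
      next
        fix d y1 assume "?P y1"
        have "embLS sA sL (a*b) c x (sL d y1) + embLS sA sL (b*c) a x (sL d y1) + embLS sA sL (c*a) b x (sL d y1) - embLS sA sL (a*b*c) u x (sL d y1)
          = tscale d (embLS sA sL (a*b) c x y1 + embLS sA sL (b*c) a x y1 + embLS sA sL (c*a) b x y1 - embLS sA sL (a*b*c) u x y1)"
          by (simp add: embLS_scale2 tscale_def fun_eq_iff algebra_simps)
        with \<open>?P y1\<close> show "?P (sL d y1)"
          using T.subspace_scale[OF B2sub] by metis
      qed
    next
      case (step w)
      then obtain p q where w: "w = br p q" by blast
      show ?case unfolding w by (subst V2_ident[OF two unitA anti]) (intro cl)
    qed
    then show "?P y" .
  qed
  have V4s: "V4 sA sL br \<subseteq> B2 sA sL br"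
    unfolding V4_def tspan_def
  proof (rule T.span_minimal[OF _ B2sub], safe)
    fix ps :: "('a \<times> 'a) list" and x y
    assume z: "sum_list [a * b. (a,b) \<leftarrow> ps] = 0" and y: "y \<in> kder sL br"
    let ?P = "\<lambda>y. \<forall>a b. embIL sA sL a b x y - embIL sA sL (a*b) u x y \<in> B2 sA sL br"
    have "?P y"
      using y unfolding kder_def
    proof (induction rule: L.span_induct)
      case base
      show ?case
      proof (rule L.subspaceI; unfold mem_Collect_eq)
        show "?P 0" using T.subspace_0[OF B2sub] by (simp add: embIL_zero2)
      next
        fix y1 y2 assume "?P y1" "?P y2"
        show "?P (y1 + y2)"
        proof (intro allI)
          fix a b
          have "embIL sA sL a b x (y1+y2) - embIL sA sL (a*b) u x (y1+y2) =
            (embIL sA sL a b x y1 - embIL sA sL (a*b) u x y1) + (embIL sA sL a b x y2 - embIL sA sL (a*b) u x y2)"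
            by (simp add: embIL_add2 fun_eq_iff algebra_simps)
          with \<open>?P y1\<close> \<open>?P y2\<close> show "embIL sA sL a b x (y1+y2) - embIL sA sL (a*b) u x (y1+y2) \<in> B2 sA sL br"
            using T.subspace_add[OF B2sub] by metis
        qed
      next
        fix d y1 assume "?P y1"
        show "?P (sL d y1)"
        proof (intro allI)
          fix a b
          have "embIL sA sL a b x (sL d y1) - embIL sA sL (a*b) u x (sL d y1) =
            tscale d (embIL sA sL a b x y1 - embIL sA sL (a*b) u x y1)"
            by (simp add: embIL_scale2 tscale_def fun_eq_iff algebra_simps)
          with \<open>?P y1\<close> show "embIL sA sL a b x (sL d y1) - embIL sA sL (a*b) u x (sL d y1) \<in> B2 sA sL br"
            using T.subspace_scale[OF B2sub] by metis
        qed
      qed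
    next
      case (step w)
      then obtain p q where w: "w = br p q" by blast
      show ?case unfolding w
      proof (intro allI)
        fix a b
        show "embIL sA sL a b x (br p q) - embIL sA sL (a*b) u x (br p q) \<in> B2 sA sL br"
          by (subst V4_ident[OF unitA anti]) (intro cl)
      qed
    qed
    then show "sum_list [embIL sA sL a b x y. (a,b) \<leftarrow> ps] \<in> B2 sA sL br"
      unfolding V4_reduce[of sA sL x y ps u] z embIL_zero1 add_0_right
      by (intro sum_list_in[OF B2sub]) auto
  qed
  let ?S = "V1 sA sL br \<union> V2 sA sL u br \<union> V3 sA sL u br \<union> V4 sA sL br"
  have sup: "tspan ?S \<subseteq> B2 sA sL br"
    unfolding tspan_def by (rule T.span_minimal[OF _ B2sub]) (use V1s V2s V3s V4s in blast)
  have U: "p * u = p" for p using unitA[of p] by (simp add: mult.commute)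
  have sub: "B2 sA sL br \<subseteq> tspan ?S"
    unfolding B2_def tspan_def
  proof (rule T.span_minimal[OF _ T.subspace_span], safe)
    fix us vs ws
    show "bdry_g sA sL br us vs ws \<in> T.span ?S"
    proof (rule bdry_in[OF T.subspace_span])
      fix p q r :: "'a \<times> 'l"
      obtain a x where p: "p = (a,x)" by (cases p)
      obtain b y where q: "q = (b,y)" by (cases q)
      obtain c z where r: "r = (c,z)" by (cases r)
      have in4: "sum_list [embIL sA sL p1 p2 s (br v w). (p1,p2) \<leftarrow> [(m, e), (-(a*b*c), u)]] \<in> T.span ?S"
        if "m * e = a*b*c" for m e s v w
      proof -
        have "sum_list [embIL sA sL p1 p2 s (br v w). (p1,p2) \<leftarrow> [(m, e), (-(a*b*c), u)]] \<in> V4 sA sL br"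
          unfolding V4_def tspan_def
          apply (rule T.span_base)
          apply (simp only: mem_Collect_eq)
          apply (rule exI[where x="[(m, e), (-(a*b*c), u)]"])
          apply (rule exI[where x=s])
          apply (rule exI[where x="br v w"])
          using that U kb by simp
        then show ?thesis by (intro T.span_base) blast
      qed
      have in1: "embLS sA sL m e (br s v) w + embLS sA sL m e v (br s w) \<in> T.span ?S" for m e s v w
      proof -
        have "embLS sA sL m e (br s v) w + embLS sA sL m e v (br s w) \<in> V1 sA sL br"
          unfolding V1_def tspan_def by (rule T.span_base) blast
        then show ?thesis by (intro T.span_base) blast
      qed
      have in2: "embLS sA sL (a*b) c z (br x y) + embLS sA sL (b*c) a z (br x y) + embLS sA sL (c*a) b z (br x y)
         - embLS sA sL (a*b*c) u z (br x y) \<in> T.span ?S"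
      proof -
        have "embLS sA sL (a*b) c z (br x y) + embLS sA sL (b*c) a z (br x y) + embLS sA sL (c*a) b z (br x y)
         - embLS sA sL (a*b*c) u z (br x y) \<in> V2 sA sL u br"
          unfolding V2_def tspan_def by (rule T.span_base) (use kb in blast)
        then show ?thesis by (intro T.span_base) blast
      qed
      have in3: "Fmap sA sL u br (a*b*c) x y z \<in> T.span ?S"
      proof -
        have "Fmap sA sL u br (a*b*c) x y z \<in> V3 sA sL u br"
          unfolding V3_def tspan_def by (rule T.span_base) blast
        then show ?thesis by (intro T.span_base) blast
      qed
      have e1: "a * b * c = a*b*c" "b * c * a = a*b*c" "c * a * b = a*b*c" by (simp_all add: ac_simps)
      show "bdry_g sA sL br [p] [q] [r] \<in> T.span ?S"
        unfolding p q r sub_ident[OF two unitA anti]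
        by (intro T.span_add T.span_diff T.span_neg in1 in2 in3 in4 e1)
    qed
  qed
  show ?thesis using sub sup by blast
qed

end
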